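(* Let $\alpha$ be irrational with continued fraction denominators $(q_n)_{n\ge1}$, fix $\delta_1>0$ and $0<c<(1/24)^2(1-e^{-\delta_1})$, and let $\delta\ge\delta'\ge\delta_1$. Let $A$ be either an interval of positive length in $\mathbb R/\mathbb Z$, or an annulus $A=B(\ell\alpha,e^{-\ell\delta'})\setminus B(\ell\alpha,ce^{-\ell\delta'})$ with $q_l/2\le\ell<q_l$ for some $l\ge1$. Suppose that for all sufficiently large $m$ a set of integers $\widetilde{\mathcal D}_m[A]\subset\{n:q_m/2\le n<q_m,\ n\alpha\in A\}$ is given with $\frac18|A|q_m\le\#\widetilde{\mathcal D}_m[A]\le|A|q_m$ (e.g. the sets provided by Propositions 3.4 and 3.5). Let $0<a<\min\{2^{-10},2^{-10}\delta\}$ and let $j\ge1$ be an integer with $\frac12\le j\cdot 2^9a\delta^{-1}\le1$. Then for all sufficiently large $k$ there exist subsets $\mathcal D_{k+2i}[A]\subset\widetilde{\mathcal D}_{k+2i}[A]$, $0\le i<j$, such that (i) the closed balls $B\big(n\alpha,\frac{a}{\delta n}\big)$, $n\in\bigcup_{0\le i<j}\mathcal D_{k+2i}[A]$, are pairwise disjoint; (ii) for each $0\le i<j$, $\#\mathcal D_{k+2i}[A]\ge\frac12\#\widetilde{\mathcal D}_{k+2i}[A]\ge\frac1{16}|A|\,q_{k+2i}$.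
   Context: Points are on the circle $\mathbb R/\mathbb Z$; $B(y,r)$ is the closed ball for $\|\cdot\|_{\mathbb R/\mathbb Z}$; $|\cdot|$ is Lebesgue measure; $q_n$ is the denominator of the $n$-th continued fraction convergent of $\alpha$. *)

theory Defs
  imports "HOL-Analysis.Analysis"
begin

fun cf_rem :: "real \<Rightarrow> nat \<Rightarrow> real" where
  "cf_rem x 0 = x"
| "cf_rem x (Suc n) = 1 / frac (cf_rem x n)"

definition cf_coeff :: "real \<Rightarrow> nat \<Rightarrow> nat" where
  "cf_coeff x n = nat \<lfloor>cf_rem x n\<rfloor>"

fun cf_denom :: "real \<Rightarrow> nat \<Rightarrow> nat" where
  "cf_denom x 0 = 1"
| "cf_denom x (Suc 0) = cf_coeff x 1"
| "cf_denom x (Suc (Suc n)) = cf_coeff x (Suc (Suc n)) * cf_denom x (Suc n) + cf_denom x n"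

section \<open>The circle R/Z, modelled by 1-periodic subsets of R\<close>

definition circ_norm :: "real \<Rightarrow> real" where
  "circ_norm x = \<bar>x - of_int (round x)\<bar>"

definition circ_ball :: "real \<Rightarrow> real \<Rightarrow> real set" where
  "circ_ball y r = {x. circ_norm (x - y) \<le> r}"

definition circ_measure :: "real set \<Rightarrow> real" where
  "circ_measure A = measure lebesgue (A \<inter> {0..<1})"

definition circ_proj :: "real set \<Rightarrow> real set" where
  "circ_proj I = {x. \<exists>k::int. x - of_int k \<in> I}"

definition circ_interval :: "real set \<Rightarrow> bool" where
  "circ_interval A \<longleftrightarrow> (\<exists>I. is_interval I \<and> bounded I \<and>
      0 < measure lebesgue I \<and> measure lebesgue I \<le> 1 \<and> A = circ_proj I)"

end

theory Submission
  imports Defs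
begin


lemma circ_norm_le: "circ_norm x \<le> \<bar>x - of_int k\<bar>"
proof -
  have r: "\<bar>x - of_int (round x)\<bar> \<le> 1/2"
    unfolding round_def using of_int_floor_le[of "x + 1/2"] floor_correct[of "x+1/2"] by linarith
  show ?thesis
  proof (cases "k = round x")
    case True then show ?thesis by (simp add: circ_norm_def)
  next
    case False
    then have "k \<le> round x - 1 \<or> k \<ge> round x + 1" by linarith
    then have "real_of_int k \<le> of_int (round x) - 1 \<or> real_of_int k \<ge> of_int (round x) + 1"
      by (metis of_int_1 of_int_add of_int_diff of_int_le_iff)
    then have "\<bar>x - of_int k\<bar> \<ge> 1/2"
      unfolding round_def using of_int_floor_le[of "x + 1/2"] floor_correct[of "x+1/2"]
      by linarith
    then show ?thesis using r by (simp add: circ_norm_def)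
  qed
qed

lemma circ_norm_nonneg: "circ_norm x \<ge> 0" by (simp add: circ_norm_def)

lemma circ_norm_minus: "circ_norm (- x) = circ_norm x"
proof -
  have "circ_norm (-x) \<le> circ_norm x"
    using circ_norm_le[of "-x" "- round x"] by (simp add: circ_norm_def abs_minus_commute)
  moreover have "circ_norm x \<le> circ_norm (-x)"
    using circ_norm_le[of "x" "- round (-x)"] by (simp add: circ_norm_def abs_minus_commute)
  ultimately show ?thesis by simp
qed

lemma circ_norm_triangle: "circ_norm (x + y) \<le> circ_norm x + circ_norm y"
proof -
  have "circ_norm (x+y) \<le> \<bar>x + y - of_int (round x + round y)\<bar>" by (rule circ_norm_le)
  also have "\<dots> \<le> circ_norm x + circ_norm y" by (simp add: circ_norm_def)
  finally show ?thesis .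
qed

lemma ball_meet:
  assumes "z \<in> circ_ball y r" "z \<in> circ_ball y' r'"
  shows "circ_norm (y' - y) \<le> r + r'"
proof -
  have "circ_norm (y' - y) = circ_norm ((z - y) + - (z - y'))" by simp
  also have "\<dots> \<le> circ_norm (z - y) + circ_norm (z - y')"
    using circ_norm_triangle circ_norm_minus by metis
  finally show ?thesis using assms by (simp add: circ_ball_def)
qed

lemma packing:
  fixes X :: "real set"
  assumes "finite X" "X \<subseteq> {lo..hi}" "\<forall>x\<in>X. \<forall>y\<in>X. x \<noteq> y \<longrightarrow> \<bar>x - y\<bar> \<ge> g" "g > 0" "X \<noteq> {}"
  shows "real (card X) * g \<le> hi - lo + g"
  using assms
proof (induction "card X" arbitrary: X hi)
  case 0 then show ?case by simp
next
  case (Suc n)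
  define M where "M = Max X"
  have M: "M \<in> X" "\<forall>y\<in>X. y \<le> M" using Suc.prems M_def by auto
  show ?case
  proof (cases "X - {M} = {}")
    case True
    then have "X = {M}" using M by auto
    then show ?thesis using Suc.prems M by auto
  next
    case False
    have sub: "X - {M} \<subseteq> {lo..M - g}"
    proof
      fix y assume y: "y \<in> X - {M}"
      then have "\<bar>M - y\<bar> \<ge> g" "y \<le> M" using Suc.prems(3) M by auto
      then show "y \<in> {lo..M-g}" using y Suc.prems(2) by auto
    qed
    have c: "card (X - {M}) = n" using Suc.hyps(2) M by (simp add: Suc.prems(1))
    have "real (card (X - {M})) * g \<le> M - g - lo + g"
      using Suc.hyps(1)[OF c[symmetric] _ sub _ Suc.prems(4) False] Suc.prems by auto
    moreover have "M \<le> hi" using M Suc.prems(2) by auto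
    moreover have "real (card X) = real n + 1" using Suc.hyps(2) by simp
    ultimately show ?thesis using c by (simp add: algebra_simps)
  qed
qed



lemma rem_irr: "x \<notin> \<rat> \<Longrightarrow> cf_rem x n \<notin> \<rat>"
proof (induction n)
  case 0 then show ?case by simp
next
  case (Suc n)
  have "frac (cf_rem x n) \<notin> \<rat>"
  proof
    assume "frac (cf_rem x n) \<in> \<rat>"
    then have "frac (cf_rem x n) + of_int \<lfloor>cf_rem x n\<rfloor> \<in> \<rat>" by simp
    then show False using Suc by (simp add: frac_def)
  qed
  then show ?case
    by (metis Rats_inverse cf_rem.simps(2) inverse_eq_divide inverse_inverse_eq)
qed

lemma frac_pos: "x \<notin> \<rat> \<Longrightarrow> frac (cf_rem x n) > 0"
proof -
  assume "x \<notin> \<rat>"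
  then have "cf_rem x n \<notin> \<rat>" by (rule rem_irr)
  then have "frac (cf_rem x n) \<noteq> 0" using frac_eq_0_iff Ints_subset_Rats by blast
  then show ?thesis using frac_ge_0 by (simp add: order_le_less)
qed

lemma rem_gt1: "x \<notin> \<rat> \<Longrightarrow> cf_rem x (Suc n) > 1"
  using frac_pos[of x n] frac_lt_1[of "cf_rem x n"] by simp

lemma rem_step: "x \<notin> \<rat> \<Longrightarrow> cf_rem x n = of_int \<lfloor>cf_rem x n\<rfloor> + 1 / cf_rem x (Suc n)"
  using frac_pos[of x n] by (simp add: frac_def)

lemma coeff_eq: "x \<notin> \<rat> \<Longrightarrow> real (cf_coeff x (Suc n)) = of_int \<lfloor>cf_rem x (Suc n)\<rfloor>"
  using rem_gt1[of x n] by (simp add: cf_coeff_def)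

lemma coeff_ge1: "x \<notin> \<rat> \<Longrightarrow> cf_coeff x (Suc n) \<ge> 1"
proof -
  assume a: "x \<notin> \<rat>"
  have "1 \<le> \<lfloor>cf_rem x (Suc n)\<rfloor>" using rem_gt1[OF a, of n] by (simp add: le_floor_iff)
  then have "nat 1 \<le> nat \<lfloor>cf_rem x (Suc n)\<rfloor>" using nat_mono by blast
  then show ?thesis by (simp add: cf_coeff_def del: cf_rem.simps)
qed

fun QQ :: "real \<Rightarrow> nat \<Rightarrow> nat" where
  "QQ x 0 = 0"
| "QQ x (Suc 0) = 1"
| "QQ x (Suc (Suc n)) = cf_coeff x (Suc n) * QQ x (Suc n) + QQ x n"

fun PP :: "real \<Rightarrow> nat \<Rightarrow> int" where
  "PP x 0 = 1"
| "PP x (Suc 0) = \<lfloor>x\<rfloor>"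
| "PP x (Suc (Suc n)) = int (cf_coeff x (Suc n)) * PP x (Suc n) + PP x n"

lemma QQ_denom: "QQ x (Suc n) = cf_denom x n \<and> QQ x (Suc (Suc n)) = cf_denom x (Suc n)"
  by (induction n) auto

lemma QQ_pos: "x \<notin> \<rat> \<Longrightarrow> QQ x (Suc n) \<ge> 1 \<and> QQ x n \<le> QQ x (Suc n)"
proof (induction n)
  case 0 then show ?case by simp
next
  case (Suc n)
  have h: "1 * QQ x (Suc n) \<le> cf_coeff x (Suc n) * QQ x (Suc n)"
    by (rule mult_le_mono1[OF coeff_ge1[OF Suc.prems]])
  have "QQ x (Suc (Suc n)) \<ge> QQ x (Suc n)"
    using h by (simp only: QQ.simps)
  then show ?case using Suc by simp
qed

lemma ident: "x \<notin> \<rat> \<Longrightarrow>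
  x * (real (QQ x (Suc n)) * cf_rem x (Suc n) + real (QQ x n)) = of_int (PP x (Suc n)) * cf_rem x (Suc n) + of_int (PP x n)"
proof (induction n)
  case 0
  have "frac x > 0" using frac_pos[OF 0, of 0] by simp
  then show ?case by (simp add: frac_def field_simps)
next
  case (Suc n)
  define r where "r = cf_rem x (Suc n)"
  define r' where "r' = cf_rem x (Suc (Suc n))"
  define c where "c = real (cf_coeff x (Suc n))"
  have rr: "r = c + 1 / r'" unfolding r_def r'_def c_def
    using rem_step[OF Suc.prems, of "Suc n"] coeff_eq[OF Suc.prems, of n] by simp
  have r'0: "r' > 0" using rem_gt1[OF Suc.prems, of "Suc n"] r'_def by linarith
  have IH: "x * (real (QQ x (Suc n)) * r + real (QQ x n)) = of_int (PP x (Suc n)) * r + of_int (PP x n)"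
    using Suc r_def by simp
  have "x * (real (QQ x (Suc (Suc n))) * r' + real (QQ x (Suc n)))
      = r' * (x * (real (QQ x (Suc n)) * r + real (QQ x n)))"
    using r'0 by (simp add: rr c_def field_simps)
  also have "\<dots> = r' * (of_int (PP x (Suc n)) * r + of_int (PP x n))" using IH by simp
  also have "\<dots> = of_int (PP x (Suc (Suc n))) * r' + of_int (PP x (Suc n))"
    using r'0 by (simp add: rr c_def field_simps)
  finally show ?case using r'_def by simp
qed

lemma det: "PP x (Suc n) * int (QQ x n) - PP x n * int (QQ x (Suc n)) = (-1) ^ Suc n"
proof (induction n)
  case 0 then show ?case by simp
next
  case (Suc n) then show ?case by (simp add: algebra_simps)
qed

definition ee :: "real \<Rightarrow> nat \<Rightarrow> real" where
  "ee x n = real (QQ x n) * x - of_int (PP x n)"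

lemma ee_formula: assumes "x \<notin> \<rat>"
  shows "ee x n * (real (QQ x (Suc n)) * cf_rem x (Suc n) + real (QQ x n)) = cf_rem x (Suc n) * (-1) ^ Suc n"
proof -
  define r where "r = cf_rem x (Suc n)"
  have I: "x * (real (QQ x (Suc n)) * r + real (QQ x n)) = of_int (PP x (Suc n)) * r + of_int (PP x n)"
    using ident[OF assms] r_def by simp
  have D: "real_of_int (PP x (Suc n)) * real (QQ x n) - of_int (PP x n) * real (QQ x (Suc n)) = (-1) ^ Suc n"
    using arg_cong[OF det[of x n], of real_of_int] by simp
  have "ee x n * (real (QQ x (Suc n)) * r + real (QQ x n))
     = real (QQ x n) * (x * (real (QQ x (Suc n)) * r + real (QQ x n))) - of_int (PP x n) * (real (QQ x (Suc n)) * r + real (QQ x n))"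
    by (simp add: ee_def algebra_simps)
  also have "\<dots> = r * (real_of_int (PP x (Suc n)) * real (QQ x n) - of_int (PP x n) * real (QQ x (Suc n)))"
    by (simp only: I) (simp add: algebra_simps)
  finally show ?thesis using D r_def by simp
qed

lemma ee_props: assumes "x \<notin> \<rat>"
  shows "\<bar>ee x n\<bar> \<ge> 1 / (real (QQ x (Suc n)) + real (QQ x n))"
    and "ee x n * (-1) ^ Suc n > 0"
proof -
  define r where "r = cf_rem x (Suc n)"
  define den where "den = real (QQ x (Suc n)) * r + real (QQ x n)"
  have r1: "r > 1" using rem_gt1[OF assms] r_def by simp
  have q1: "real (QQ x (Suc n)) \<ge> 1" using QQ_pos[OF assms, of n] by simp
  have "real (QQ x (Suc n)) * r > 0" using r1 q1 by (intro mult_pos_pos) auto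
  then have denpos: "den > 0" unfolding den_def by (simp add: add_pos_nonneg)
  have F: "ee x n * den = r * (-1) ^ Suc n" using ee_formula[OF assms] r_def den_def by simp
  then have E: "ee x n = r * (-1) ^ Suc n / den" using denpos by (simp add: field_simps)
  have "\<bar>ee x n\<bar> = r / den" using E r1 denpos by (simp add: abs_mult power_abs)
  moreover have "r / den \<ge> 1 / (real (QQ x (Suc n)) + real (QQ x n))"
  proof -
    have "real (QQ x n) \<le> r * real (QQ x n)" using mult_right_mono[of 1 r "real (QQ x n)"] r1 by simp
    then have "den \<le> r * (real (QQ x (Suc n)) + real (QQ x n))"
      unfolding den_def using r1 by (simp add: algebra_simps)
    then show ?thesis using denpos r1 q1 by (simp add: field_simps)
  qed
  ultimately show "\<bar>ee x n\<bar> \<ge> 1 / (real (QQ x (Suc n)) + real (QQ x n))" by simp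
  have "ee x n * (-1) ^ Suc n = r * ((-1) ^ Suc n * (-1) ^ Suc n) / den" using E by simp
  also have "\<dots> = r / den" by (simp flip: power_add)
  finally show "ee x n * (-1) ^ Suc n > 0" using r1 denpos by simp
qed



lemma same_sign_abs: "0 < (a::real) * b \<Longrightarrow> \<bar>a\<bar> \<le> \<bar>a + b\<bar>"
  by (auto simp: zero_less_mult_iff)

lemma best_approx:
  assumes irr: "x \<notin> \<rat>" and d: "(d::int) > 0" "d < int (QQ x (Suc n))"
  shows "\<bar>of_int d * x - of_int p\<bar> \<ge> \<bar>ee x n\<bar>"
proof -
  define D :: int where "D = (-1) ^ Suc n"
  define Q0 where "Q0 = int (QQ x n)"
  define Q1 where "Q1 = int (QQ x (Suc n))"
  define P0 where "P0 = PP x n"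
  define P1 where "P1 = PP x (Suc n)"
  have det': "P1 * Q0 - P0 * Q1 = D" using det[of x n] by (simp add: D_def P1_def P0_def Q1_def Q0_def)
  have DD: "D * D = 1" by (simp add: D_def flip: power_add)
  define u where "u = D * (d * P1 - p * Q1)"
  define v where "v = D * (p * Q0 - d * P0)"
  have du: "d = u * Q0 + v * Q1"
  proof -
    have "u * Q0 + v * Q1 = D * d * (P1 * Q0 - P0 * Q1)" by (simp add: u_def v_def algebra_simps)
    also have "\<dots> = d" using det' DD by (simp add: algebra_simps)
    finally show ?thesis by simp
  qed
  have pu: "p = u * P0 + v * P1"
  proof -
    have "u * P0 + v * P1 = D * p * (P1 * Q0 - P0 * Q1)" by (simp add: u_def v_def algebra_simps)
    also have "\<dots> = p" using det' DD by (simp add: algebra_simps)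
    finally show ?thesis by simp
  qed
  have lin: "of_int d * x - of_int p = of_int u * ee x n + of_int v * ee x (Suc n)"
  proof -
    have "real_of_int d = of_int u * of_int Q0 + of_int v * of_int Q1" using du by (metis of_int_add of_int_mult)
    moreover have "real_of_int p = of_int u * of_int P0 + of_int v * of_int P1" using pu by (metis of_int_add of_int_mult)
    ultimately show ?thesis by (simp add: ee_def Q0_def Q1_def P0_def P1_def algebra_simps)
  qed
  define s :: real where "s = (-1) ^ Suc n"
  have s1: "ee x n * s > 0" using ee_props(2)[OF irr, of n] s_def by simp
  have s2: "ee x (Suc n) * (- s) > 0" using ee_props(2)[OF irr, of "Suc n"] s_def by simp
  have ss: "s * s = 1" by (simp add: s_def flip: power_add)
  have neg: "ee x n * ee x (Suc n) < 0"
  proof -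
    have "0 < (ee x n * s) * (ee x (Suc n) * (- s))" by (rule mult_pos_pos[OF s1 s2])
    also have "\<dots> = - (ee x n * ee x (Suc n)) * (s * s)" by (simp add: algebra_simps)
    finally show ?thesis using ss by simp
  qed
  have Q0nn: "Q0 \<ge> 0" "Q1 \<ge> 1" using QQ_pos[OF irr, of n] by (auto simp: Q0_def Q1_def)
  show ?thesis
  proof (cases "u * v < 0")
    case True
    have "0 < (of_int u * ee x n) * (of_int v * ee x (Suc n))"
    proof -
      have eq: "(of_int u * ee x n) * (of_int v * ee x (Suc n)) = of_int (u * v) * (ee x n * ee x (Suc n))"
        by (simp add: algebra_simps)
      have neg1: "real_of_int (u * v) < 0" using True by linarith
      show ?thesis unfolding eq by (rule mult_neg_neg[OF neg1 neg])
    qed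
    then have "\<bar>of_int u * ee x n\<bar> \<le> \<bar>of_int d * x - of_int p\<bar>" using lin same_sign_abs by simp
    moreover have "\<bar>real_of_int u\<bar> \<ge> 1" using True by (cases "u = 0") auto
    moreover have "\<bar>ee x n\<bar> \<le> \<bar>real_of_int u\<bar> * \<bar>ee x n\<bar>"
      using mult_right_mono[of 1 "\<bar>real_of_int u\<bar>" "\<bar>ee x n\<bar>"] calculation(2) by simp
    ultimately show ?thesis by (simp add: abs_mult)
  next
    case False
    have "v = 0"
    proof (rule ccontr)
      assume v0: "v \<noteq> 0"
      consider "u = 0" | "u > 0 \<and> v > 0" | "u < 0 \<and> v < 0" using False v0
        by (metis linorder_neqE_linordered_idom mult_neg_pos mult_pos_neg)
      then show False
      proof cases
        case 1
        then have "d = v * Q1" using du by simp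
        show False
        proof (cases "v > 0")
          case True
          then have "v * Q1 \<ge> 1 * Q1" using Q0nn by (intro mult_right_mono) auto
          moreover have "d < Q1" using d(2) Q1_def by simp
          ultimately show False using \<open>d = v * Q1\<close> by linarith
        next
          case False
          then have "v < 0" using v0 by simp
          then have "v * Q1 < 0" using Q0nn by (simp add: mult_neg_pos)
          then show False using \<open>d = v * Q1\<close> d by simp
        qed
      next
        case 2
        then have "u * Q0 \<ge> 0" "v * Q1 \<ge> Q1" using Q0nn by auto
        then show False using du d Q1_def by linarith
      next
        case 3
        then have "u * Q0 \<le> 0" "v * Q1 < 0" using Q0nn by (auto simp: mult_nonpos_nonneg mult_neg_pos)
        then show False using du d by linarith
      qed
    qed
    then have "d = u * Q0" using du by simp
    then have "u \<noteq> 0" using d by auto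
    then have "\<bar>real_of_int u\<bar> \<ge> 1" by linarith
    moreover have "\<bar>ee x n\<bar> \<le> \<bar>real_of_int u\<bar> * \<bar>ee x n\<bar>"
      using mult_right_mono[of 1 "\<bar>real_of_int u\<bar>" "\<bar>ee x n\<bar>"] calculation by simp
    moreover have "\<bar>of_int d * x - of_int p\<bar> = \<bar>real_of_int u\<bar> * \<bar>ee x n\<bar>"
      using lin \<open>v = 0\<close> by (simp add: abs_mult)
    ultimately show ?thesis by simp
  qed
qed

lemma denom_QQ: "cf_denom x n = QQ x (Suc n)" using QQ_denom by metis

lemma denom_ge1: "x \<notin> \<rat> \<Longrightarrow> cf_denom x n \<ge> 1"
  using QQ_pos denom_QQ by metis

lemma denom_mono: "x \<notin> \<rat> \<Longrightarrow> m \<le> m' \<Longrightarrow> cf_denom x m \<le> cf_denom x m'"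
  using lift_Suc_mono_le[of "cf_denom x"] QQ_pos denom_QQ by metis

lemma denom_double: assumes "x \<notin> \<rat>" shows "2 * cf_denom x n \<le> cf_denom x (Suc (Suc n))"
proof -
  have "cf_denom x (Suc (Suc n)) = cf_coeff x (Suc (Suc n)) * cf_denom x (Suc n) + cf_denom x n" by simp
  moreover have "1 * cf_denom x (Suc n) \<le> cf_coeff x (Suc (Suc n)) * cf_denom x (Suc n)"
    by (rule mult_le_mono1[OF coeff_ge1[OF assms]])
  moreover have "cf_denom x n \<le> cf_denom x (Suc n)" using denom_mono[OF assms] by simp
  ultimately show ?thesis by linarith
qed

lemma separation:
  assumes irr: "x \<notin> \<rat>" and d: "(d::int) \<noteq> 0" "\<bar>d\<bar> < int (cf_denom x m)"
  shows "circ_norm (of_int d * x) \<ge> 1 / (2 * real (cf_denom x m))"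
proof -
  have main: "circ_norm (of_int d' * x) \<ge> 1 / (2 * real (cf_denom x m))"
    if d': "d' > 0" "d' < int (cf_denom x m)" for d'
  proof -
    have "circ_norm (of_int d' * x) = \<bar>of_int d' * x - of_int (round (of_int d' * x))\<bar>"
      by (simp add: circ_norm_def)
    also have "\<dots> \<ge> \<bar>ee x m\<bar>" using best_approx[OF irr d'(1)] d'(2) denom_QQ by metis
    finally have 1: "circ_norm (of_int d' * x) \<ge> \<bar>ee x m\<bar>" .
    have 2: "\<bar>ee x m\<bar> \<ge> 1 / (real (QQ x (Suc m)) + real (QQ x m))" by (rule ee_props(1)[OF irr])
    have "QQ x m \<le> QQ x (Suc m)" "QQ x (Suc m) \<ge> 1" using QQ_pos[OF irr] by auto
    then have 3: "1 / (real (QQ x (Suc m)) + real (QQ x m)) \<ge> 1 / (2 * real (QQ x (Suc m)))"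
      by (intro divide_left_mono) auto
    show ?thesis using 1 2 3 denom_QQ by (metis order_trans)
  qed
  show ?thesis
  proof (cases "d > 0")
    case True then show ?thesis using main d by simp
  next
    case False
    then have "d < 0" using d by simp
    then have "circ_norm (of_int (-d) * x) \<ge> 1 / (2 * real (cf_denom x m))" using main[of "-d"] d by simp
    moreover have "circ_norm (of_int (-d) * x) = circ_norm (of_int d * x)"
      using circ_norm_minus[of "of_int d * x"] by simp
    ultimately show ?thesis by simp
  qed
qed



lemma sep_nat:
  assumes irr: "x \<notin> \<rat>" and "y < cf_denom x m" "z < cf_denom x m" "y \<noteq> z"
  shows "circ_norm (real y * x - real z * x) \<ge> 1 / (2 * real (cf_denom x m))"
proof -
  have "real y * x - real z * x = of_int (int y - int z) * x" by (simp add: algebra_simps)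
  moreover have "circ_norm (of_int (int y - int z) * x) \<ge> 1 / (2 * real (cf_denom x m))"
    using separation[OF irr, of "int y - int z" m] assms by auto
  ultimately show ?thesis by simp
qed

lemma rad_bound:
  assumes "a > 0" "\<delta> > 0" "real q / 2 \<le> real n" "q \<ge> 1"
  shows "a / (\<delta> * real n) \<le> 2 * a / (\<delta> * real q)"
proof -
  have "real n > 0" using assms by simp
  have "\<delta> * real q \<le> 2 * (\<delta> * real n)" using assms by (simp add: field_simps)
  then have "a * (\<delta> * real q) \<le> (2 * a) * (\<delta> * real n)" using assms by (simp add: field_simps)
  then show ?thesis using assms \<open>real n > 0\<close> by (simp add: field_simps)
qed

lemma same_level:
  assumes irr: "x \<notin> \<rat>" and a: "a > 0" "\<delta> > 0" "a < 2 powr -10 * \<delta>"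
    and n: "real (cf_denom x m) / 2 \<le> real n" "n < cf_denom x m"
    and n': "real (cf_denom x m) / 2 \<le> real n'" "n' < cf_denom x m" and ne: "n \<noteq> n'"
  shows "circ_ball (real n * x) (a / (\<delta> * real n)) \<inter> circ_ball (real n' * x) (a / (\<delta> * real n')) = {}"
proof (rule ccontr)
  assume "\<not> ?thesis"
  then obtain z where z: "z \<in> circ_ball (real n * x) (a / (\<delta> * real n))" "z \<in> circ_ball (real n' * x) (a / (\<delta> * real n'))" by blast
  define q where "q = cf_denom x m"
  have q1: "q \<ge> 1" using denom_ge1[OF irr] q_def by simp
  have "circ_norm (real n' * x - real n * x) \<le> a / (\<delta> * real n) + a / (\<delta> * real n')" by (rule ball_meet[OF z])
  also have "\<dots> \<le> 2 * a / (\<delta> * real q) + 2 * a / (\<delta> * real q)"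
    using rad_bound[OF a(1,2) _ q1] n n' q_def by (metis add_mono)
  also have "\<dots> = (4 * (a / \<delta>)) / real q" by (simp add: field_simps)
  also have "\<dots> < (1/2) / real q"
  proof -
    have p: "(2::real) powr -10 = 1/1024" by (simp add: powr_minus powr_realpow)
    have "a < \<delta> / 1024" using a(3) p by simp
    then have "a / \<delta> < 1/1024" using a(2) by (simp add: field_simps)
    then have "4 * (a / \<delta>) < 1/2" by linarith
    then show ?thesis by (rule divide_strict_right_mono) (use q1 in simp)
  qed
  also have "\<dots> = 1 / (2 * real q)" by simp
  finally have lt: "circ_norm (real n' * x - real n * x) < 1 / (2 * real q)" .
  have "circ_norm (real n' * x - real n * x) \<ge> 1 / (2 * real q)"
    using sep_nat[OF irr n'(2) n(2)] ne q_def by auto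
  then show False using lt by simp
qed

lemma cross_level:
  assumes irr: "x \<notin> \<rat>" and a: "a > 0" "\<delta> > 0"
    and qq: "2 * cf_denom x m \<le> cf_denom x m'"
    and n: "real (cf_denom x m) / 2 \<le> real n" "n < cf_denom x m"
    and R: "R \<subseteq> {n'. real (cf_denom x m') / 2 \<le> real n' \<and> n' < cf_denom x m' \<and>
       circ_ball (real n * x) (a / (\<delta> * real n)) \<inter> circ_ball (real n' * x) (a / (\<delta> * real n')) \<noteq> {}}"
  shows "real (card R) \<le> 12 * a * real (cf_denom x m') / (\<delta> * real (cf_denom x m))"
proof -
  define q where "q = cf_denom x m"
  define q' where "q' = cf_denom x m'"
  have q1: "q \<ge> 1" using denom_ge1[OF irr] q_def by simp
  have q'1: "q' \<ge> 1" using denom_ge1[OF irr] q'_def by simp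
  have qq': "real q' \<ge> 2 * real q" using qq q_def q'_def by simp
  have finR: "finite R" using R by (rule finite_subset) auto
  have nR: "n \<notin> R"
  proof
    assume "n \<in> R"
    then have "real q' / 2 \<le> real n" using R q'_def by auto
    then show False using qq' n q_def by simp
  qed
  define S where "S = insert n R"
  have finS: "finite S" using finR S_def by simp
  have cS: "card S = card R + 1" using finR nR S_def by simp
  have Sq: "\<forall>y\<in>S. y < q'" using R n qq q_def q'_def S_def by auto
  define off where "off y = (real y * x - real n * x) - of_int (round (real y * x - real n * x))" for y :: nat
  define \<rho> where "\<rho> = 3 * a / (\<delta> * real q)"
  define g where "g = 1 / (2 * real q')"
  have gpos: "g > 0" using q'1 g_def by simp
  have offb: "off ` S \<subseteq> {-\<rho>..\<rho>}"
  proof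
    fix t assume "t \<in> off ` S"
    then obtain y where y: "y \<in> S" "t = off y" by auto
    have "\<bar>off y\<bar> \<le> \<rho>"
    proof (cases "y = n")
      case True then show ?thesis using a q1 by (simp add: off_def \<rho>_def)
    next
      case False
      then have yR: "y \<in> R" using y S_def by simp
      then have yb: "real q' / 2 \<le> real y" and
        ne: "circ_ball (real n * x) (a / (\<delta> * real n)) \<inter> circ_ball (real y * x) (a / (\<delta> * real y)) \<noteq> {}"
        using R q'_def by auto
      then obtain z where z: "z \<in> circ_ball (real n * x) (a / (\<delta> * real n))" "z \<in> circ_ball (real y * x) (a / (\<delta> * real y))" by blast
      have w: "2 * a / (\<delta> * real q') \<le> a / (\<delta> * real q)"
        using qq' a q1 by (simp add: field_simps)
      have "2 * a / (\<delta> * real q) = 2 * (a / (\<delta> * real q))" "\<rho> = 3 * (a / (\<delta> * real q))"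
        by (simp_all add: \<rho>_def)
      then have w2: "2 * a / (\<delta> * real q) + 2 * a / (\<delta> * real q') \<le> \<rho>" using w
        by linarith
      have "\<bar>off y\<bar> = circ_norm (real y * x - real n * x)" by (simp add: off_def circ_norm_def)
      also have "\<dots> \<le> a / (\<delta> * real n) + a / (\<delta> * real y)" by (rule ball_meet[OF z])
      also have "\<dots> \<le> 2 * a / (\<delta> * real q) + 2 * a / (\<delta> * real q')"
        using rad_bound[OF a _ q1] rad_bound[OF a yb q'1] n q_def by (metis add_mono)
      also have "\<dots> \<le> \<rho>" by (rule w2)
      finally show ?thesis .
    qed
    then show "t \<in> {-\<rho>..\<rho>}" using y by auto
  qed
  have sep: "\<forall>y\<in>S. \<forall>z\<in>S. y \<noteq> z \<longrightarrow> \<bar>off y - off z\<bar> \<ge> g"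
  proof (intro ballI impI)
    fix y z assume yz: "y \<in> S" "z \<in> S" "y \<noteq> z"
    define k where "k = round (real y * x - real n * x) - round (real z * x - real n * x)"
    have "off y - off z = (real y * x - real z * x) - of_int k" by (simp add: off_def k_def)
    then have "\<bar>off y - off z\<bar> \<ge> circ_norm (real y * x - real z * x)" using circ_norm_le by simp
    moreover have "circ_norm (real y * x - real z * x) \<ge> g"
      using sep_nat[OF irr, of y m' z] yz Sq q'_def g_def by simp
    ultimately show "\<bar>off y - off z\<bar> \<ge> g" by simp
  qed
  have inj: "inj_on off S"
    using sep gpos unfolding inj_on_def by (metis abs_zero diff_self not_le)
  have "real (card (off ` S)) * g \<le> \<rho> - (-\<rho>) + g"
    by (rule packing[OF _ offb]) (use finS sep gpos S_def in auto)
  then have "(real (card R) + 1) * g \<le> 2 * \<rho> + g" using card_image[OF inj] cS by (simp add: add.commute)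
  then have "real (card R) * g \<le> 2 * \<rho>" by (simp add: algebra_simps)
  then have "real (card R) \<le> 2 * \<rho> / g" using gpos by (simp add: field_simps)
  also have "2 * \<rho> / g = 12 * a * real q' / (\<delta> * real q)" by (simp add: \<rho>_def g_def field_simps)
  finally show ?thesis using q_def q'_def by simp
qed


theorem proposition3p6:
  fixes \<alpha> \<delta>\<^sub>1 c \<delta> \<delta>' a :: real
    and A :: "real set"
    and Dt :: "nat \<Rightarrow> nat set"
    and j :: nat
  assumes irr: "\<alpha> \<notin> \<rat>"
    and d1: "\<delta>\<^sub>1 > 0"
    and c: "0 < c" "c < (1/24)^2 * (1 - exp (- \<delta>\<^sub>1))"
    and dd: "\<delta> \<ge> \<delta>'" "\<delta>' \<ge> \<delta>\<^sub>1"
    and A: "circ_interval A \<or>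
      (\<exists>(L::nat) (l::nat). l \<ge> 1 \<and> real (cf_denom \<alpha> l) / 2 \<le> real L \<and> L < cf_denom \<alpha> l \<and>
         A = circ_ball (real L * \<alpha>) (exp (- real L * \<delta>'))
             - circ_ball (real L * \<alpha>) (c * exp (- real L * \<delta>')))"
    and Dt: "\<exists>M. \<forall>m\<ge>M.
        Dt m \<subseteq> {n. real (cf_denom \<alpha> m) / 2 \<le> real n \<and> n < cf_denom \<alpha> m \<and> real n * \<alpha> \<in> A} \<and>
        circ_measure A * real (cf_denom \<alpha> m) / 8 \<le> real (card (Dt m)) \<and>
        real (card (Dt m)) \<le> circ_measure A * real (cf_denom \<alpha> m)"
    and a: "0 < a" "a < min (2 powr -10) (2 powr -10 * \<delta>)"
    and j: "j \<ge> 1" "1/2 \<le> real j * 2^9 * a / \<delta>" "real j * 2^9 * a / \<delta> \<le> 1"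
  shows "\<exists>K. \<forall>k\<ge>K. \<exists>D :: nat \<Rightarrow> nat set.
     (\<forall>i<j. D i \<subseteq> Dt (k + 2*i)) \<and>
     (\<forall>n\<in>(\<Union>i<j. D i). \<forall>n'\<in>(\<Union>i<j. D i). n \<noteq> n' \<longrightarrow>
        circ_ball (real n * \<alpha>) (a / (\<delta> * real n)) \<inter>
        circ_ball (real n' * \<alpha>) (a / (\<delta> * real n')) = {}) \<and>
     (\<forall>i<j. real (card (D i)) \<ge> real (card (Dt (k + 2*i))) / 2 \<and>
            real (card (Dt (k + 2*i))) / 2 \<ge> circ_measure A * real (cf_denom \<alpha> (k + 2*i)) / 16)"
proof -
  have \<delta>pos: "\<delta> > 0" using d1 dd by linarith
  have aA: "a < 2 powr -10 * \<delta>" using a by simp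
  have ja: "real j * a / \<delta> \<le> 1/512"
  proof -
    have "real j * 2^9 * a / \<delta> = 512 * (real j * a / \<delta>)" by simp
    then show ?thesis using j(3) by linarith
  qed
  obtain M where M: "\<forall>m\<ge>M.
        Dt m \<subseteq> {n. real (cf_denom \<alpha> m) / 2 \<le> real n \<and> n < cf_denom \<alpha> m \<and> real n * \<alpha> \<in> A} \<and>
        circ_measure A * real (cf_denom \<alpha> m) / 8 \<le> real (card (Dt m)) \<and>
        real (card (Dt m)) \<le> circ_measure A * real (cf_denom \<alpha> m)" using Dt by blast
  have muA: "circ_measure A \<ge> 0" by (simp add: circ_measure_def)
  have M1: "\<And>m n. m \<ge> M \<Longrightarrow> n \<in> Dt m \<Longrightarrow> real (cf_denom \<alpha> m) / 2 \<le> real n \<and> n < cf_denom \<alpha> m"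
  proof -
    fix m n assume "m \<ge> M" "n \<in> Dt m"
    then have "n \<in> {n. real (cf_denom \<alpha> m) / 2 \<le> real n \<and> n < cf_denom \<alpha> m \<and> real n * \<alpha> \<in> A}"
      using M by blast
    then show "real (cf_denom \<alpha> m) / 2 \<le> real n \<and> n < cf_denom \<alpha> m" by simp
  qed
  have M2: "\<And>m. m \<ge> M \<Longrightarrow> circ_measure A * real (cf_denom \<alpha> m) / 8 \<le> real (card (Dt m)) \<and>
        real (card (Dt m)) \<le> circ_measure A * real (cf_denom \<alpha> m)"
  proof -
    fix m assume "m \<ge> M" then show "circ_measure A * real (cf_denom \<alpha> m) / 8 \<le> real (card (Dt m)) \<and>
        real (card (Dt m)) \<le> circ_measure A * real (cf_denom \<alpha> m)" using M by blast
  qed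
  have finDt: "finite (Dt m)" if "m \<ge> M" for m
  proof (rule finite_subset[OF _ finite_lessThan])
    show "Dt m \<subseteq> {..<cf_denom \<alpha> m}" using M1[OF that] by auto
  qed
  define conf where "conf n n' \<longleftrightarrow> circ_ball (real n * \<alpha>) (a / (\<delta> * real n)) \<inter>
        circ_ball (real n' * \<alpha>) (a / (\<delta> * real n')) \<noteq> {}" for n n' :: nat
  show ?thesis
  proof (rule exI[of _ M], intro allI impI)
    fix k assume k: "M \<le> k"
    define q where "q i = cf_denom \<alpha> (k + 2 * i)" for i
    define U where "U i = (\<Union>i0\<in>{..<i}. \<Union>n\<in>Dt (k + 2 * i0). {n' \<in> Dt (k + 2 * i). conf n n'})" for i
    define D where "D i = Dt (k + 2 * i) - U i" for i
    have Mi: "\<And>i. k + 2 * i \<ge> M" using k by simp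
    have Dtp: "\<And>i n. n \<in> Dt (k + 2 * i) \<Longrightarrow> real (q i) / 2 \<le> real n \<and> n < q i"
      unfolding q_def using M1[OF Mi] by blast
    have cardDt: "\<And>i. circ_measure A * real (q i) / 8 \<le> real (card (Dt (k + 2 * i))) \<and>
        real (card (Dt (k + 2 * i))) \<le> circ_measure A * real (q i)"
      unfolding q_def using M2[OF Mi] by blast
    have qq: "2 * q i0 \<le> q i" if "i0 < i" for i0 i
    proof -
      have "2 * q i0 \<le> cf_denom \<alpha> (Suc (Suc (k + 2 * i0)))" using denom_double[OF irr] q_def by simp
      also have "\<dots> \<le> q i" unfolding q_def by (rule denom_mono[OF irr]) (use that in simp)
      finally show ?thesis .
    qed
    have Ubound: "real (card (U i)) \<le> circ_measure A * real (q i) / 32" if "i < j" for i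
    proof -
      have fin1: "finite (Dt (k + 2 * i0))" for i0 using finDt Mi by blast
      have "card (U i) \<le> (\<Sum>i0<i. card (\<Union>n\<in>Dt (k + 2 * i0). {n' \<in> Dt (k + 2 * i). conf n n'}))"
        unfolding U_def by (rule card_UN_le) simp
      also have "\<dots> \<le> (\<Sum>i0<i. \<Sum>n\<in>Dt (k + 2 * i0). card {n' \<in> Dt (k + 2 * i). conf n n'})"
        by (intro sum_mono card_UN_le fin1)
      finally have c0: "real (card (U i)) \<le> real (\<Sum>i0<i. \<Sum>n\<in>Dt (k + 2 * i0). card {n' \<in> Dt (k + 2 * i). conf n n'})"
        by (simp only: of_nat_le_iff)
      have c1: "real (card (U i)) \<le> (\<Sum>i0<i. \<Sum>n\<in>Dt (k + 2 * i0). real (card {n' \<in> Dt (k + 2 * i). conf n n'}))"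
        using c0 by (simp only: of_nat_sum)
      have c2: "(\<Sum>n\<in>Dt (k + 2 * i0). real (card {n' \<in> Dt (k + 2 * i). conf n n'}))
              \<le> 12 * a * circ_measure A * real (q i) / \<delta>" if i0: "i0 < i" for i0
      proof -
        have q0: "q i0 \<ge> 1" using denom_ge1[OF irr] q_def by simp
        have "(\<Sum>n\<in>Dt (k + 2 * i0). real (card {n' \<in> Dt (k + 2 * i). conf n n'}))
            \<le> (\<Sum>n\<in>Dt (k + 2 * i0). 12 * a * real (q i) / (\<delta> * real (q i0)))"
        proof (rule sum_mono)
          fix n assume n: "n \<in> Dt (k + 2 * i0)"
          show "real (card {n' \<in> Dt (k + 2 * i). conf n n'}) \<le> 12 * a * real (q i) / (\<delta> * real (q i0))"
            unfolding q_def
          proof (rule cross_level[OF irr a(1) \<delta>pos])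
            show "2 * cf_denom \<alpha> (k + 2 * i0) \<le> cf_denom \<alpha> (k + 2 * i)" using qq[OF i0] q_def by simp
            show "real (cf_denom \<alpha> (k + 2 * i0)) / 2 \<le> real n" "n < cf_denom \<alpha> (k + 2 * i0)"
              using Dtp[OF n] q_def by auto
            show "{n' \<in> Dt (k + 2 * i). conf n n'} \<subseteq> {n'. real (cf_denom \<alpha> (k + 2 * i)) / 2 \<le> real n' \<and> n' < cf_denom \<alpha> (k + 2 * i) \<and>
               circ_ball (real n * \<alpha>) (a / (\<delta> * real n)) \<inter> circ_ball (real n' * \<alpha>) (a / (\<delta> * real n')) \<noteq> {}}"
              using Dtp q_def conf_def by auto
          qed
        qed
        also have "\<dots> = real (card (Dt (k + 2 * i0))) * (12 * a * real (q i) / (\<delta> * real (q i0)))" by simp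
        also have "\<dots> \<le> (circ_measure A * real (q i0)) * (12 * a * real (q i) / (\<delta> * real (q i0)))"
          using cardDt[of i0] a \<delta>pos by (intro mult_right_mono) auto
        also have "\<dots> = 12 * a * circ_measure A * real (q i) / \<delta>" using q0 by (simp add: field_simps)
        finally show ?thesis .
      qed
      have "real (card (U i)) \<le> (\<Sum>i0<i. 12 * a * circ_measure A * real (q i) / \<delta>)"
        using c1 sum_mono[of "{..<i}", OF c2] by (meson lessThan_iff order_trans)
      also have "\<dots> = real i * (12 * a * circ_measure A * real (q i) / \<delta>)" by simp
      also have "\<dots> \<le> real j * (12 * a * circ_measure A * real (q i) / \<delta>)"
        using that a \<delta>pos muA by (intro mult_right_mono) auto
      also have "\<dots> = 12 * (real j * a / \<delta>) * (circ_measure A * real (q i))" by (simp add: field_simps)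
      also have "\<dots> \<le> 12 * (1/512) * (circ_measure A * real (q i))"
        using ja muA by (intro mult_right_mono) auto
      also have "\<dots> \<le> circ_measure A * real (q i) / 32" using muA by simp
      finally show ?thesis .
    qed
    have P1: "\<forall>i<j. D i \<subseteq> Dt (k + 2*i)" using D_def by auto
    have P2: "\<forall>n\<in>(\<Union>i<j. D i). \<forall>n'\<in>(\<Union>i<j. D i). n \<noteq> n' \<longrightarrow>
        circ_ball (real n * \<alpha>) (a / (\<delta> * real n)) \<inter>
        circ_ball (real n' * \<alpha>) (a / (\<delta> * real n')) = {}"
    proof (intro ballI impI)
      fix n n' assume nD: "n \<in> (\<Union>i<j. D i)" and n'D: "n' \<in> (\<Union>i<j. D i)" and ne: "n \<noteq> n'"
      obtain i where i: "n \<in> D i" using nD by auto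
      obtain i' where i': "n' \<in> D i'" using n'D by auto
      have nDt: "n \<in> Dt (k + 2 * i)" and n'Dt: "n' \<in> Dt (k + 2 * i')" using i i' D_def by auto
      consider "i = i'" | "i < i'" | "i' < i" by linarith
      then show "circ_ball (real n * \<alpha>) (a / (\<delta> * real n)) \<inter> circ_ball (real n' * \<alpha>) (a / (\<delta> * real n')) = {}"
      proof cases
        case 1
        have A1: "real (q i) / 2 \<le> real n \<and> n < q i" by (rule Dtp[OF nDt])
        have A2: "real (q i) / 2 \<le> real n' \<and> n' < q i" using Dtp[OF n'Dt] 1 by simp
        show ?thesis
          by (rule same_level[OF irr a(1) \<delta>pos aA _ _ _ _ ne, of "k + 2 * i"]) (use A1 A2 q_def in auto)
      next
        case 2
        then have "n' \<notin> U i'" using i' D_def by auto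
        then have "\<not> conf n n'" using 2 nDt n'Dt U_def by blast
        then show ?thesis using conf_def by auto
      next
        case 3
        then have "n \<notin> U i" using i D_def by auto
        then have "\<not> conf n' n" using 3 nDt n'Dt U_def by blast
        then show ?thesis using conf_def by auto
      qed
    qed
    have P3: "\<forall>i<j. real (card (D i)) \<ge> real (card (Dt (k + 2*i))) / 2 \<and>
            real (card (Dt (k + 2*i))) / 2 \<ge> circ_measure A * real (cf_denom \<alpha> (k + 2*i)) / 16"
    proof (intro allI impI conjI)
      fix i assume ij: "i < j"
      have "Dt (k + 2 * i) \<subseteq> D i \<union> U i" using D_def by auto
      then have "card (Dt (k + 2 * i)) \<le> card (D i \<union> U i)"
        by (intro card_mono) (use finDt Mi D_def U_def in auto)
      also have "\<dots> \<le> card (D i) + card (U i)" by (rule card_Un_le)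
      finally have "real (card (Dt (k + 2 * i))) \<le> real (card (D i)) + real (card (U i))" by linarith
      then show "real (card (D i)) \<ge> real (card (Dt (k + 2 * i))) / 2"
        using Ubound[OF ij] cardDt[of i] muA by linarith
    next
      fix i assume ij: "i < j"
      show "real (card (Dt (k + 2 * i))) / 2 \<ge> circ_measure A * real (cf_denom \<alpha> (k + 2 * i)) / 16"
        using cardDt[of i] q_def by simp
    qed
    show "\<exists>D :: nat \<Rightarrow> nat set.
     (\<forall>i<j. D i \<subseteq> Dt (k + 2*i)) \<and>
     (\<forall>n\<in>(\<Union>i<j. D i). \<forall>n'\<in>(\<Union>i<j. D i). n \<noteq> n' \<longrightarrow>
        circ_ball (real n * \<alpha>) (a / (\<delta> * real n)) \<inter>
        circ_ball (real n' * \<alpha>) (a / (\<delta> * real n')) = {}) \<and>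
     (\<forall>i<j. real (card (D i)) \<ge> real (card (Dt (k + 2*i))) / 2 \<and>
            real (card (Dt (k + 2*i))) / 2 \<ge> circ_measure A * real (cf_denom \<alpha> (k + 2*i)) / 16)"
      by (rule exI[where x = D], intro conjI, rule P1, rule P2, rule P3)
  qed
qed

end
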